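(* Let $\ell^\infty$ be the space of bounded real sequences with the topology of the sup norm, and let $\mathcal{C}(\ell^\infty,(\ell^\infty)^* )$ be the $\sigma$-algebra on $\ell^\infty$ generated by all continuous linear functionals on $\ell^\infty$. Then $(\ell^\infty,\text{norm topology},\mathcal{C}(\ell^\infty,(\ell^\infty)^* ))$ satisfies: (LM1) every point admits a local basis of neighborhoods consisting of measurable sets; (LM2) every continuous linear functional is measurable; (LM3) the addition $(x,y)\mapsto x+y$ is measurable from the product $\sigma$-algebra $\mathcal{C}(\ell^\infty,(\ell^\infty)^* )^{\otimes2}$ to $\mathcal{C}(\ell^\infty,(\ell^\infty)^* )$; (LM4) the $\sigma$-algebra is invariant under dilations $x\mapsto tx$, $t\ne0$. *)

theory Defs
  imports "HOL-Analysis.Analysis"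
begin

text \<open>The space l-infinity of bounded real sequences, with the sup norm, is modelled
  as the type of bounded continuous functions from nat (discrete topology) to real.\<close>
type_synonym linf = "nat \<Rightarrow>\<^sub>C real"

definition cyl_alg :: "linf measure" where
  "cyl_alg = sigma UNIV {f -` B | f B. bounded_linear (f :: linf \<Rightarrow> real) \<and> B \<in> sets borel}"

end

theory Submission
  imports Defs
begin

definition gens :: "linf set set" where
  "gens = {f -` B | f B. bounded_linear (f :: linf \<Rightarrow> real) \<and> B \<in> sets borel}"

lemma cyl_eq: "cyl_alg = sigma UNIV gens"
  unfolding cyl_alg_def gens_def by simp

lemma space_cyl[simp]: "space cyl_alg = UNIV"
  unfolding cyl_eq by (simp add: space_measure_of_conv)

lemma sets_cyl: "sets cyl_alg = sigma_sets UNIV gens"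
  unfolding cyl_eq by (rule sets_measure_of) simp

lemma gen_in: "bounded_linear (f :: linf \<Rightarrow> real) \<Longrightarrow> B \<in> sets borel \<Longrightarrow> f -` B \<in> sets cyl_alg"
proof -
  assume a: "bounded_linear f" "B \<in> sets borel"
  have "f -` B \<in> gens" unfolding gens_def
    using a by blast
  then show ?thesis unfolding sets_cyl by (rule sigma_sets.Basic)
qed

lemma bl_meas: "bounded_linear (f :: linf \<Rightarrow> real) \<Longrightarrow> f \<in> cyl_alg \<rightarrow>\<^sub>M borel"
  by (rule borel_measurableI) (auto intro!: gen_in borel_open)

lemma eval_bl: "bounded_linear (\<lambda>y::linf. apply_bcontfun y n)"
proof (rule bounded_linear_intro[where K=1])
  fix y :: linf show "norm (apply_bcontfun y n) \<le> norm y * 1"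
    using norm_bounded[of y n] by simp
qed simp_all

lemma meas_into: 
  assumes "\<And>f B. bounded_linear (f :: linf \<Rightarrow> real) \<Longrightarrow> B \<in> sets borel \<Longrightarrow> g -` (f -` B) \<inter> space M \<in> sets M"
  shows "g \<in> M \<rightarrow>\<^sub>M cyl_alg"
  unfolding cyl_eq
  by (rule measurable_measure_of) (auto simp: gens_def intro: assms)

lemma scale_meas: "(\<lambda>x::linf. s *\<^sub>R x) \<in> cyl_alg \<rightarrow>\<^sub>M cyl_alg"
proof (rule meas_into)
  fix f :: "linf \<Rightarrow> real" and B :: "real set"
  assume f: "bounded_linear f" and B: "B \<in> sets borel"
  have "bounded_linear (\<lambda>x. f (s *\<^sub>R x))"
    using bounded_linear_compose[OF f bounded_linear_scaleR_right[of s]] by (simp add: o_def)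
  from gen_in[OF this B] show "(\<lambda>x. s *\<^sub>R x) -` f -` B \<inter> space cyl_alg \<in> sets cyl_alg"
    by (simp add: vimage_def)
qed

lemma cball_eq: "cball (x::linf) r = (\<Inter>n. (\<lambda>y. apply_bcontfun y n) -` cball (apply_bcontfun x n) r)"
proof (intro equalityI subsetI)
  fix y assume "y \<in> cball x r"
  then show "y \<in> (\<Inter>n. (\<lambda>y. apply_bcontfun y n) -` cball (apply_bcontfun x n) r)"
    using dist_bounded[of x _ y] by (auto simp: mem_cball intro: order_trans)
next
  fix y assume "y \<in> (\<Inter>n. (\<lambda>y. apply_bcontfun y n) -` cball (apply_bcontfun x n) r)"
  then show "y \<in> cball x r"
    by (auto simp: mem_cball intro!: dist_bound)
qed

lemma cball_meas: "cball (x::linf) r \<in> sets cyl_alg"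
  unfolding cball_eq
proof -
  have "\<And>n. (\<lambda>y. apply_bcontfun y n) -` cball (apply_bcontfun x n) r \<in> sets cyl_alg"
    by (rule gen_in[OF eval_bl]) (rule borel_closed, simp)
  then show "(\<Inter>n. (\<lambda>y. apply_bcontfun y n) -` cball (apply_bcontfun x n) r) \<in> sets cyl_alg"
    by (intro sets.countable_INT') auto
qed

theorem proposition5p1:
  shows "(\<forall>x :: linf. \<forall>U. open U \<and> x \<in> U \<longrightarrow>
            (\<exists>V \<in> sets cyl_alg. x \<in> interior V \<and> V \<subseteq> U))
       \<and> (\<forall>f :: linf \<Rightarrow> real. bounded_linear f \<longrightarrow> f \<in> cyl_alg \<rightarrow>\<^sub>M borel)
       \<and> (\<lambda>(x, y). x + y) \<in> cyl_alg \<Otimes>\<^sub>M cyl_alg \<rightarrow>\<^sub>M cyl_alg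
       \<and> (\<forall>t :: real. t \<noteq> 0 \<longrightarrow> (\<lambda>A. (\<lambda>x. t *\<^sub>R x) ` A) ` sets cyl_alg = sets cyl_alg)"
proof (intro conjI allI impI)
  fix x :: linf and U assume "open U \<and> x \<in> U"
  then obtain e where e: "e > 0" "ball x e \<subseteq> U"
    using open_contains_ball by blast
  have "ball x (e/2) \<subseteq> interior (cball x (e/2))"
    by (rule interior_maximal) auto
  moreover have "cball x (e/2) \<subseteq> U" using e by (auto simp: subset_eq)
  ultimately show "\<exists>V \<in> sets cyl_alg. x \<in> interior V \<and> V \<subseteq> U"
    using e cball_meas[of x "e/2"] by (intro bexI[of _ "cball x (e/2)"]) auto
next
  fix f :: "linf \<Rightarrow> real" assume "bounded_linear f" then show "f \<in> cyl_alg \<rightarrow>\<^sub>M borel"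
    by (rule bl_meas)
next
  show "(\<lambda>(x, y). x + y) \<in> cyl_alg \<Otimes>\<^sub>M cyl_alg \<rightarrow>\<^sub>M cyl_alg"
  proof (rule meas_into)
    fix f :: "linf \<Rightarrow> real" and B :: "real set"
    assume f: "bounded_linear f" and B: "B \<in> sets borel"
    have "(\<lambda>p. f (fst p) + f (snd p)) \<in> cyl_alg \<Otimes>\<^sub>M cyl_alg \<rightarrow>\<^sub>M borel"
      using bl_meas[OF f] by measurable
    moreover have "(\<lambda>p. f (fst p) + f (snd p)) = (\<lambda>p. f (case p of (x, y) \<Rightarrow> x + y))"
      using bounded_linear.linear[OF f] by (auto simp: linear_add)
    ultimately have "(\<lambda>p. f (case p of (x, y) \<Rightarrow> x + y)) \<in> cyl_alg \<Otimes>\<^sub>M cyl_alg \<rightarrow>\<^sub>M borel"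
      by simp
    from measurable_sets[OF this B]
    show "(\<lambda>(x, y). x + y) -` f -` B \<inter> space (cyl_alg \<Otimes>\<^sub>M cyl_alg) \<in> sets (cyl_alg \<Otimes>\<^sub>M cyl_alg)"
      by (simp add: vimage_def)
  qed
next
  fix t :: real assume t: "t \<noteq> 0"
  have img: "(\<lambda>x. t *\<^sub>R x) ` A = (\<lambda>x. (1/t) *\<^sub>R x) -` A" for A :: "linf set"
  proof (intro equalityI subsetI)
    fix y assume "y \<in> (\<lambda>x. t *\<^sub>R x) ` A" then show "y \<in> (\<lambda>x. (1/t) *\<^sub>R x) -` A"
      using t by auto
  next
    fix y assume "y \<in> (\<lambda>x. (1/t) *\<^sub>R x) -` A"
    then show "y \<in> (\<lambda>x. t *\<^sub>R x) ` A"
      using t by (intro image_eqI[of _ _ "(1/t) *\<^sub>R y"]) auto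
  qed
  show "(\<lambda>A. (\<lambda>x. t *\<^sub>R x) ` A) ` sets cyl_alg = sets cyl_alg"
  proof (intro equalityI subsetI)
    fix B assume "B \<in> (\<lambda>A. (\<lambda>x. t *\<^sub>R x) ` A) ` sets cyl_alg"
    then obtain A where "A \<in> sets cyl_alg" "B = (\<lambda>x. t *\<^sub>R x) ` A" by auto
    then show "B \<in> sets cyl_alg"
      using measurable_sets[OF scale_meas[of "1/t"]] img by auto
  next
    fix B assume B: "B \<in> sets cyl_alg"
    have "B = (\<lambda>x. t *\<^sub>R x) ` ((\<lambda>x. (1/t) *\<^sub>R x) ` B)"
      using t by (auto simp: image_image)
    moreover have "(\<lambda>x. (1/t) *\<^sub>R x) ` B \<in> sets cyl_alg"
    proof -
      have "(\<lambda>x. (1/t) *\<^sub>R x) ` B = (\<lambda>x. t *\<^sub>R x) -` B"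
      proof (intro equalityI subsetI)
        fix y assume "y \<in> (\<lambda>x. (1/t) *\<^sub>R x) ` B" then show "y \<in> (\<lambda>x. t *\<^sub>R x) -` B"
          using t by auto
      next
        fix y assume "y \<in> (\<lambda>x. t *\<^sub>R x) -` B"
        then show "y \<in> (\<lambda>x. (1/t) *\<^sub>R x) ` B"
          using t by (intro image_eqI[of _ _ "t *\<^sub>R y"]) auto
      qed
      then show ?thesis using measurable_sets[OF scale_meas[of t] B] by simp
    qed
    ultimately show "B \<in> (\<lambda>A. (\<lambda>x. t *\<^sub>R x) ` A) ` sets cyl_alg" by blast
  qed
qed

end
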